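(* Let $(X,\widetilde{\tau},\mathfrak{a}_E,E)$ be a soft aura topological space. For every $(G,E)\in\mathrm{SS}(X,E)$, the transfinite sequence $(\mathrm{cl}_{\mathfrak{a}}^{\alpha}(G,E))_{\alpha}$ stabilizes at some ordinal $\gamma\le|X|$. The operator $\mathrm{cl}_{\mathfrak{a}}^{\infty}(G,E):=\mathrm{cl}_{\mathfrak{a}}^{\gamma}(G,E)$ is a soft Kuratowski closure operator, i.e. it satisfies $\mathrm{cl}_{\mathfrak{a}}^{\infty}(\widetilde{\Phi})=\widetilde{\Phi}$, $(G,E)\sqsubseteq\mathrm{cl}_{\mathfrak{a}}^{\infty}(G,E)$, $\mathrm{cl}_{\mathfrak{a}}^{\infty}((G,E)\sqcup(H,E))=\mathrm{cl}_{\mathfrak{a}}^{\infty}(G,E)\sqcup\mathrm{cl}_{\mathfrak{a}}^{\infty}(H,E)$, and $\mathrm{cl}_{\mathfrak{a}}^{\infty}(\mathrm{cl}_{\mathfrak{a}}^{\infty}(G,E))=\mathrm{cl}_{\mathfrak{a}}^{\infty}(G,E)$ for all $(G,E),(H,E)\in\mathrm{SS}(X,E)$.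
   Context: Let $X$ be a nonempty set and $E$ a nonempty parameter set. A soft set over $X$ is a map $F:E\to\mathcal{P}(X)$, written $(F,E)$; $\mathrm{SS}(X,E)$ denotes all soft sets. Operations ($\sqsubseteq$, soft union $\sqcup$ including arbitrary unions, etc.) are parameterwise; $\widetilde{\Phi}$ is the soft set with all values $\emptyset$. A soft topology $\widetilde{\tau}$ is a subfamily of $\mathrm{SS}(X,E)$ containing $\widetilde{\Phi}$ and the soft set with all values $X$, closed under arbitrary soft unions and finite soft intersections. A soft scope function is a map $\mathfrak{a}_E:X\to\widetilde{\tau}$ with $x\in\mathfrak{a}_E(x)(e)$ for all $x\in X$, $e\in E$; $(X,\widetilde{\tau},\mathfrak{a}_E,E)$ is a soft aura topological space. Soft aura-closure: $\mathrm{cl}_{\mathfrak{a}}(G,E)(e)=\{x\in X:\mathfrak{a}_E(x)(e)\cap G(e)\neq\emptyset\}$. Transfinite iterates: $\mathrm{cl}_{\mathfrak{a}}^0(G,E)=(G,E)$; $\mathrm{cl}_{\mathfrak{a}}^{\alpha+1}(G,E)=\mathrm{cl}_{\mathfrak{a}}(\mathrm{cl}_{\mathfrak{a}}^{\alpha}(G,E))$; $\mathrm{cl}_{\mathfrak{a}}^{\lambda}(G,E)=\bigsqcup_{\alpha<\lambda}\mathrm{cl}_{\mathfrak{a}}^{\alpha}(G,E)$ for limit ordinals $\lambda$. *)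

theory Defs
  imports Main
begin

text \<open>Soft sets over the universe X = UNIV :: 'x set with parameter set
  E = UNIV :: 'e set are maps 'e \<Rightarrow> 'x set.\<close>

type_synonym ('e, 'x) soft_set = "'e \<Rightarrow> 'x set"

definition soft_null :: "('e, 'x) soft_set" where
  "soft_null = (\<lambda>e. {})"

definition soft_absolute :: "('e, 'x) soft_set" where
  "soft_absolute = (\<lambda>e. UNIV)"

definition soft_subset :: "('e, 'x) soft_set \<Rightarrow> ('e, 'x) soft_set \<Rightarrow> bool" where
  "soft_subset F G \<longleftrightarrow> (\<forall>e. F e \<subseteq> G e)"

definition soft_union :: "('e, 'x) soft_set \<Rightarrow> ('e, 'x) soft_set \<Rightarrow> ('e, 'x) soft_set" where
  "soft_union F G = (\<lambda>e. F e \<union> G e)"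

definition soft_inter :: "('e, 'x) soft_set \<Rightarrow> ('e, 'x) soft_set \<Rightarrow> ('e, 'x) soft_set" where
  "soft_inter F G = (\<lambda>e. F e \<inter> G e)"

definition soft_Union :: "('e, 'x) soft_set set \<Rightarrow> ('e, 'x) soft_set" where
  "soft_Union S = (\<lambda>e. \<Union>F\<in>S. F e)"

definition soft_topology :: "('e, 'x) soft_set set \<Rightarrow> bool" where
  "soft_topology \<tau> \<longleftrightarrow>
     soft_null \<in> \<tau> \<and> soft_absolute \<in> \<tau> \<and>
     (\<forall>S. S \<subseteq> \<tau> \<longrightarrow> soft_Union S \<in> \<tau>) \<and>
     (\<forall>F\<in>\<tau>. \<forall>G\<in>\<tau>. soft_inter F G \<in> \<tau>)"

definition soft_aura_space :: "('e, 'x) soft_set set \<Rightarrow> ('x \<Rightarrow> ('e, 'x) soft_set) \<Rightarrow> bool" where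
  "soft_aura_space \<tau> a \<longleftrightarrow> soft_topology \<tau> \<and> (\<forall>x. a x \<in> \<tau> \<and> (\<forall>e. x \<in> a x e))"

definition soft_aura_cl :: "('x \<Rightarrow> ('e, 'x) soft_set) \<Rightarrow> ('e, 'x) soft_set \<Rightarrow> ('e, 'x) soft_set" where
  "soft_aura_cl a G = (\<lambda>e. {x. a x e \<inter> G e \<noteq> {}})"

text \<open>Transfinite iteration along a well-order r: the element i of Field r stands
  for the ordinal given by the order type of its strict initial segment.\<close>
definition soft_iter_step ::
  "('x \<Rightarrow> ('e, 'x) soft_set) \<Rightarrow> ('e, 'x) soft_set \<Rightarrow> 'b rel \<Rightarrow>
   ('b \<Rightarrow> ('e, 'x) soft_set) \<Rightarrow> 'b \<Rightarrow> ('e, 'x) soft_set" where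
  "soft_iter_step a G r f i =
     (if underS r i = {} then G
      else if (\<exists>j\<in>underS r i. \<forall>k\<in>underS r i. (k, j) \<in> r)
      then soft_aura_cl a (f (THE j. j \<in> underS r i \<and> (\<forall>k\<in>underS r i. (k, j) \<in> r)))
      else soft_Union (f ` underS r i))"

definition soft_iter ::
  "('x \<Rightarrow> ('e, 'x) soft_set) \<Rightarrow> ('e, 'x) soft_set \<Rightarrow> 'b rel \<Rightarrow> 'b \<Rightarrow> ('e, 'x) soft_set" where
  "soft_iter a G r = wfrec (r - Id) (soft_iter_step a G r)"

text \<open>Extend a well-order w by a new top element None; the top then
  represents the ordinal (order type) of w itself.\<close>
definition ext_top :: "'c rel \<Rightarrow> 'c option rel" where
  "ext_top w = {(Some x, Some y) | x y. (x, y) \<in> w} \<union>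
               {(z, None) | z. z = None \<or> (\<exists>x\<in>Field w. z = Some x)}"

text \<open>cl_a^alpha(G) where the ordinal alpha is the order type of the well-order w.\<close>
definition soft_cl_ord ::
  "('x \<Rightarrow> ('e, 'x) soft_set) \<Rightarrow> 'c rel \<Rightarrow> ('e, 'x) soft_set \<Rightarrow> ('e, 'x) soft_set" where
  "soft_cl_ord a w G = soft_iter a G (ext_top w) None"

definition soft_cl_inf ::
  "('x \<Rightarrow> ('e, 'x) soft_set) \<Rightarrow> ('e, 'x) soft_set \<Rightarrow> ('e, 'x) soft_set" where
  "soft_cl_inf a G = soft_cl_ord a
     (SOME \<gamma> :: 'x rel. Well_order \<gamma> \<and> (\<gamma>, card_of (UNIV :: 'x set)) \<in> ordLeq \<and>
        (\<forall>w :: 'x rel. Well_order w \<and> (\<gamma>, w) \<in> ordLeq \<longrightarrow> soft_cl_ord a w G = soft_cl_ord a \<gamma> G)) G"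

end

theory Submission
  imports Defs
begin

definition Pn :: "('x \<Rightarrow> ('e, 'x) soft_set) \<Rightarrow> nat \<Rightarrow> ('e, 'x) soft_set \<Rightarrow> ('e, 'x) soft_set" where
  "Pn a n G = (soft_aura_cl a ^^ n) G"

definition star :: "('x \<Rightarrow> ('e, 'x) soft_set) \<Rightarrow> ('e, 'x) soft_set \<Rightarrow> ('e, 'x) soft_set" where
  "star a G = (SUP n. Pn a n G)"

lemma cl_mono: "F \<le> G \<Longrightarrow> soft_aura_cl a F \<le> soft_aura_cl a G"
  unfolding soft_aura_cl_def le_fun_def by blast

lemma cl_ext: "\<forall>x e. x \<in> a x e \<Longrightarrow> G \<le> soft_aura_cl a G"
  unfolding soft_aura_cl_def le_fun_def by blast

lemma cl_SUP: "soft_aura_cl a (SUP n. F n) = (SUP n. soft_aura_cl a (F n))"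
  unfolding soft_aura_cl_def by (rule ext) auto

lemma cl_sup: "soft_aura_cl a (sup F G) = sup (soft_aura_cl a F) (soft_aura_cl a G)"
  unfolding soft_aura_cl_def by (rule ext) auto

lemma cl_bot: "soft_aura_cl a bot = bot"
  unfolding soft_aura_cl_def by (rule ext) auto

lemma Pn_Suc: "Pn a (Suc n) G = soft_aura_cl a (Pn a n G)"
  unfolding Pn_def by simp

lemma Pn_0: "Pn a 0 G = G"
  unfolding Pn_def by simp

lemma Pn_mono_n: assumes "\<forall>x e. x \<in> a x e" "m \<le> n" shows "Pn a m G \<le> Pn a n G"
  using assms(2)
proof (induction n)
  case 0 then show ?case by simp
next
  case (Suc n)
  show ?case
  proof (cases "m = Suc n")
    case False
    then have "Pn a m G \<le> Pn a n G" using Suc by simp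
    also have "\<dots> \<le> Pn a (Suc n) G" unfolding Pn_Suc using cl_ext[OF assms(1)] .
    finally show ?thesis .
  qed simp
qed

lemma Pn_le_star: "Pn a n G \<le> star a G"
  unfolding star_def by (rule SUP_upper) simp

lemma G_le_star: "G \<le> star a G"
  using Pn_le_star[of a 0 G] by (simp add: Pn_0)

lemma cl_star: assumes "\<forall>x e. x \<in> a x e" shows "soft_aura_cl a (star a G) = star a G"
proof (rule antisym)
  show "soft_aura_cl a (star a G) \<le> star a G"
    unfolding star_def cl_SUP by (rule SUP_least) (metis Pn_Suc Pn_le_star star_def)
  show "star a G \<le> soft_aura_cl a (star a G)" by (rule cl_ext[OF assms])
qed

lemma Pn_bot: "Pn a n bot = bot"
  by (induction n) (simp_all only: Pn_0 Pn_Suc cl_bot)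

lemma Pn_sup: "Pn a n (sup G H) = sup (Pn a n G) (Pn a n H)"
  by (induction n) (simp_all only: Pn_0 Pn_Suc cl_sup)

lemma Pn_star: assumes "\<forall>x e. x \<in> a x e" shows "Pn a n (star a G) = star a G"
  by (induction n) (simp_all add: Pn_0 Pn_Suc cl_star[OF assms])

lemma star_bot: "star a bot = bot"
  unfolding star_def Pn_bot by simp

lemma star_sup: "star a (sup G H) = sup (star a G) (star a H)"
  unfolding star_def Pn_sup by (simp add: SUP_sup_distrib)

lemma star_star: assumes "\<forall>x e. x \<in> a x e" shows "star a (star a G) = star a G"
  unfolding star_def[of a "star a G"] Pn_star[OF assms] by simp


lemma Pn_Suc_app: "Pn a (Suc n) G e = {x. a x e \<inter> Pn a n G e \<noteq> {}}"
  unfolding Pn_Suc soft_aura_cl_def by simp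

lemma Pn_stable: assumes "Pn a k G e = Pn a (Suc k) G e" shows "Pn a (k + j) G e = Pn a k G e"
proof (induction j)
  case 0 then show ?case by simp
next
  case (Suc j)
  have "Pn a (k + Suc j) G e = {x. a x e \<inter> Pn a (k + j) G e \<noteq> {}}"
    using Pn_Suc_app[of a "k + j" G e] by simp
  also have "\<dots> = Pn a (Suc k) G e" using Suc Pn_Suc_app[of a k G e] by simp
  finally show ?case using assms by simp
qed

lemma Pn_strict_card:
  assumes ext: "\<forall>x e. x \<in> a x e" and fin: "finite (UNIV :: 'x set)"
  shows "(\<forall>k<m. Pn a k G e \<noteq> Pn a (Suc k) G e) \<Longrightarrow> m \<le> card (Pn a m G e :: 'x set)"
proof (induction m)
  case 0 then show ?case by simp
next
  case (Suc m)
  have le: "Pn a m G e \<subseteq> Pn a (Suc m) G e"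
    using Pn_mono_n[OF ext, of m "Suc m" G] by (simp add: le_fun_def)
  have ne: "Pn a m G e \<noteq> Pn a (Suc m) G e" using Suc.prems by simp
  have "card (Pn a m G e) < card (Pn a (Suc m) G e)"
    by (rule psubset_card_mono) (use le ne fin in \<open>auto intro: finite_subset\<close>)
  with Suc show ?case by simp
qed

lemma star_finite:
  assumes ext: "\<forall>x e. x \<in> a x e" and fin: "finite (UNIV :: 'x set)"
  shows "star a G = Pn a (card (UNIV :: 'x set)) (G :: ('e,'x) soft_set)"
proof (rule antisym)
  let ?N = "card (UNIV :: 'x set)"
  show "Pn a ?N G \<le> star a G" by (rule Pn_le_star)
  show "star a G \<le> Pn a ?N G"
    unfolding le_fun_def
  proof
    fix e
    have "\<exists>k<Suc ?N. Pn a k G e = Pn a (Suc k) G e"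
    proof (rule ccontr)
      assume "\<not> ?thesis"
      then have "Suc ?N \<le> card (Pn a (Suc ?N) G e)"
        using Pn_strict_card[OF ext fin, of "Suc ?N" G e] by blast
      moreover have "card (Pn a (Suc ?N) G e) \<le> ?N" by (rule card_mono[OF fin]) simp
      ultimately show False by simp
    qed
    then obtain k where k: "k \<le> ?N" "Pn a k G e = Pn a (Suc k) G e" using less_Suc_eq_le by blast
    have "Pn a n G e \<subseteq> Pn a ?N G e" for n
    proof (cases "n \<le> ?N")
      case True then show ?thesis using Pn_mono_n[OF ext True, of G] by (simp add: le_fun_def)
    next
      case False
      then obtain j where j: "n = k + j" using k(1) by (metis le_add_diff_inverse le_trans nat_le_linear)
      have "Pn a n G e = Pn a k G e" using Pn_stable[OF k(2)] j by simp
      also have "\<dots> \<subseteq> Pn a ?N G e" using Pn_mono_n[OF ext k(1), of G] by (simp add: le_fun_def)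
      finally show ?thesis .
    qed
    then show "star a G e \<le> Pn a ?N G e" unfolding star_def by (auto simp: SUP_apply)
  qed
qed


lemma step_cong:
  assumes as: "antisym r" and eq: "\<forall>j\<in>underS r i. f j = g j"
  shows "soft_iter_step a G r f i = soft_iter_step a G r g i"
proof -
  let ?P = "\<lambda>j. j \<in> underS r i \<and> (\<forall>k\<in>underS r i. (k, j) \<in> r)"
  have "?P (THE j. ?P j)" if "\<exists>j. ?P j"
  proof (rule theI')
    show "\<exists>!j. ?P j" using that as unfolding antisym_def by blast
  qed
  then show ?thesis unfolding soft_iter_step_def using eq
    by (auto simp: Bex_def image_def)
qed

lemma wo_wf: "Well_order r \<Longrightarrow> wf (r - Id)"
  unfolding well_order_on_def by blast

lemma wo_antisym: "Well_order r \<Longrightarrow> antisym r"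
  unfolding well_order_on_def linear_order_on_def partial_order_on_def by blast

lemma iter_unfold:
  assumes wo: "Well_order r"
  shows "soft_iter a G r i = soft_iter_step a G r (soft_iter a G r) i"
proof -
  have "soft_iter a G r i = soft_iter_step a G r (cut (soft_iter a G r) (r - Id) i) i"
    unfolding soft_iter_def by (rule wfrec[OF wo_wf[OF wo]])
  also have "\<dots> = soft_iter_step a G r (soft_iter a G r) i"
    by (rule step_cong[OF wo_antisym[OF wo]]) (auto simp: underS_def cut_apply)
  finally show ?thesis .
qed

lemma limit_large:
  assumes wo: "Well_order r" and ne: "underS r i \<noteq> {}"
    and nomax: "\<not> (\<exists>j\<in>underS r i. \<forall>k\<in>underS r i. (k, j) \<in> r)"
  shows "\<exists>j\<in>underS r i. \<exists>S. S \<subseteq> underS r j \<and> finite S \<and> card S = n"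
proof (induction n)
  case 0
  from ne obtain j where "j \<in> underS r i" by blast
  then show ?case by (intro bexI[of _ j] exI[of _ "{}"]) auto
next
  case (Suc n)
  then obtain j S where j: "j \<in> underS r i" and S: "S \<subseteq> underS r j" "finite S" "card S = n" by blast
  from nomax j obtain k where k: "k \<in> underS r i" "(k, j) \<notin> r" by blast
  have refl: "Refl r" and tr: "trans r" and tot: "Total r"
    using wo unfolding well_order_on_def linear_order_on_def partial_order_on_def preorder_on_def by blast+
  have jF: "j \<in> Field r" and kF: "k \<in> Field r" using j k(1) unfolding underS_def Field_def by blast+
  have "k \<noteq> j" using refl jF k(2) unfolding refl_on_def by blast
  then have jk: "(j, k) \<in> r" using tot jF kF k(2) unfolding total_on_def by blast
  have sub: "insert j S \<subseteq> underS r k"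
  proof
    fix s assume "s \<in> insert j S"
    then show "s \<in> underS r k"
    proof
      assume "s = j" then show ?thesis using jk \<open>k \<noteq> j\<close> unfolding underS_def by blast
    next
      assume "s \<in> S"
      then have "(s, j) \<in> r" using S(1) unfolding underS_def by blast
      then have "(s, k) \<in> r" using jk tr unfolding trans_def by blast
      moreover have "s \<noteq> k" using \<open>(s, j) \<in> r\<close> k(2) by blast
      ultimately show ?thesis unfolding underS_def by blast
    qed
  qed
  have "j \<notin> S" using S(1) unfolding underS_def by blast
  then have "card (insert j S) = Suc n" using S by simp
  then show ?case using k(1) sub S(2) by (intro bexI[of _ k] exI[of _ "insert j S"]) auto
qed

lemma iter_main:
  assumes wo: "Well_order r" and ext: "\<forall>x e. x \<in> a x e"
  shows "soft_iter a G r i \<le> star a G \<and>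
         (\<forall>S. S \<subseteq> underS r i \<and> finite S \<longrightarrow> Pn a (card S) G \<le> soft_iter a G r i)"
  using wo_wf[OF wo]
proof (induction i rule: wf_induct_rule)
  case (less i)
  let ?f = "soft_iter a G r"
  have IH: "\<And>j. j \<in> underS r i \<Longrightarrow> ?f j \<le> star a G \<and>
         (\<forall>S. S \<subseteq> underS r j \<and> finite S \<longrightarrow> Pn a (card S) G \<le> ?f j)"
    using less unfolding underS_def by blast
  let ?P = "\<lambda>j. j \<in> underS r i \<and> (\<forall>k\<in>underS r i. (k, j) \<in> r)"
  show ?case
  proof (cases "underS r i = {}")
    case True
    then have fi: "?f i = G" using iter_unfold[OF wo, of a G i] by (simp add: soft_iter_step_def)
    show ?thesis using True by (simp add: fi G_le_star Pn_0)
  next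
    case ne: False
    show ?thesis
    proof (cases "\<exists>j. ?P j")
      case True
      define t where "t = (THE j. ?P j)"
      have Pt: "?P t" unfolding t_def
      proof (rule theI')
        show "\<exists>!j. ?P j" using True wo_antisym[OF wo] unfolding antisym_def by blast
      qed
      have fi: "?f i = soft_aura_cl a (?f t)"
        using iter_unfold[OF wo, of a G i] ne True unfolding t_def
        by (simp add: soft_iter_step_def Bex_def)
      have IHt: "?f t \<le> star a G" "\<And>S. S \<subseteq> underS r t \<Longrightarrow> finite S \<Longrightarrow> Pn a (card S) G \<le> ?f t"
        using IH[of t] Pt by blast+
      have up: "?f i \<le> star a G"
        unfolding fi using cl_mono[OF IHt(1), of a] cl_star[OF ext, of G] by simp
      have low: "Pn a (card S) G \<le> ?f i" if S: "S \<subseteq> underS r i" "finite S" for S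
      proof (cases "t \<in> S")
        case True
        have sub: "S - {t} \<subseteq> underS r t" using S(1) Pt unfolding underS_def by blast
        have "card S = Suc (card (S - {t}))" using True S(2) by (metis card_Suc_Diff1)
        then have "Pn a (card S) G = soft_aura_cl a (Pn a (card (S - {t})) G)" by (simp add: Pn_Suc)
        also have "\<dots> \<le> ?f i" unfolding fi by (rule cl_mono[OF IHt(2)]) (use sub S(2) in auto)
        finally show ?thesis .
      next
        case False
        have sub: "S \<subseteq> underS r t" using S(1) Pt False unfolding underS_def by blast
        have "Pn a (card S) G \<le> ?f t" using IHt(2)[OF sub S(2)] .
        also have "\<dots> \<le> ?f i" unfolding fi by (rule cl_ext[OF ext])
        finally show ?thesis .
      qed
      show ?thesis using up low by blast
    next
      case False
      have fi: "?f i = soft_Union (?f ` underS r i)"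
        using iter_unfold[OF wo, of a G i] ne False
        by (simp add: soft_iter_step_def Bex_def)
      have below: "?f j \<le> ?f i" if "j \<in> underS r i" for j
        unfolding fi soft_Union_def le_fun_def using that by blast
      have up: "?f i \<le> star a G"
        unfolding fi soft_Union_def le_fun_def using IH by (auto simp: le_fun_def)
      have low: "Pn a n G \<le> ?f i" for n
      proof -
        obtain j S where j: "j \<in> underS r i" and S: "S \<subseteq> underS r j" "finite S" "card S = n"
          using limit_large[OF wo ne, of n] False by blast
        have "Pn a n G \<le> ?f j" using IH[OF j] S by blast
        also have "\<dots> \<le> ?f i" by (rule below[OF j])
        finally show ?thesis .
      qed
      show ?thesis using up low by blast
    qed
  qed
qed


lemma ext_top_Field: "Field (ext_top w) = insert None (Some ` Field w)"
  unfolding ext_top_def Field_def by (auto; blast)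

lemma ext_top_underS_None: "underS (ext_top w) None = Some ` Field w"
  unfolding ext_top_def underS_def by auto

lemma ext_top_wo:
  assumes wo: "Well_order w"
  shows "Well_order (ext_top w)"
proof -
  have refl: "Refl w" and tr: "trans w" and tot: "Total w" and as: "antisym w"
    using wo unfolding well_order_on_def linear_order_on_def partial_order_on_def preorder_on_def by blast+
  have wf: "wf (w - Id)" using wo_wf[OF wo] .
  have r1: "Refl (ext_top w)"
    using refl unfolding refl_on_def ext_top_Field by (auto simp: ext_top_def)
  have r2: "trans (ext_top w)"
    using tr unfolding trans_def ext_top_def by (auto simp: Field_def)
  have r3: "antisym (ext_top w)"
    using as unfolding antisym_def ext_top_def by auto
  have r4: "Total (ext_top w)"
    using tot unfolding total_on_def ext_top_Field by (auto simp: ext_top_def)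
  have eq: "ext_top w - Id = map_prod Some Some ` (w - Id) \<union> {(Some x, None) | x. x \<in> Field w}"
    unfolding ext_top_def by auto
  have wf1: "wf (map_prod Some Some ` (w - Id))"
    by (rule wf_map_prod_image[OF wf]) (simp add: inj_def)
  have wf2: "wf {(Some x, None :: 'a option) | x. x \<in> Field w}"
    by (rule wf_no_loop) auto
  have r5: "wf (ext_top w - Id)"
    unfolding eq by (rule wf_Un[OF wf1 wf2]) auto
  show ?thesis
    unfolding well_order_on_def linear_order_on_def partial_order_on_def preorder_on_def
    using r1 r2 r3 r4 r5 by (auto intro: FieldI1 FieldI2)
qed

lemma cl_ord_star:
  fixes w :: "'c rel" and G :: "('e, 'x) soft_set"
  assumes wo: "Well_order w" and ext: "\<forall>x e. x \<in> a x e"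
    and big: "(card_of (UNIV :: 'x set), w) \<in> ordLeq"
  shows "soft_cl_ord a w G = star a G"
proof -
  have wo': "Well_order (ext_top w)" by (rule ext_top_wo[OF wo])
  note M = iter_main[OF wo' ext, of G None]
  have "(card_of (Field (card_of (UNIV :: 'x set))), card_of (Field w)) \<in> ordLeq" by (rule card_of_mono2[OF big])
  then obtain g :: "'x \<Rightarrow> 'c" where g: "inj g" "range g \<subseteq> Field w"
    unfolding Field_card_of card_of_ordLeq[symmetric] by blast
  have low: "Pn a (card S) G \<le> soft_cl_ord a w G" if "S \<subseteq> Some ` Field w" "finite S" for S
    using M that unfolding soft_cl_ord_def ext_top_underS_None by blast
  have "star a G \<le> soft_cl_ord a w G"
  proof (cases "finite (UNIV :: 'x set)")
    case True
    let ?S = "Some ` range g"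
    have "card ?S = card (UNIV :: 'x set)"
      using g(1) by (simp add: card_image inj_def)
    moreover have "?S \<subseteq> Some ` Field w" using g(2) by blast
    ultimately show ?thesis using low[of ?S] True star_finite[OF ext True, of G] by simp
  next
    case False
    have "infinite (Some ` Field w)"
    proof
      assume "finite (Some ` Field w)"
      then have "finite (Field w)" by (rule finite_imageD) simp
      then have "finite (range g)" using g(2) finite_subset by blast
      then show False using False g(1) finite_imageD by blast
    qed
    then have "\<And>n. Pn a n G \<le> soft_cl_ord a w G"
      using low infinite_arbitrarily_large by metis
    then show ?thesis unfolding star_def by (rule SUP_least)
  qed
  moreover have "soft_cl_ord a w G \<le> star a G" using M unfolding soft_cl_ord_def by blast
  ultimately show ?thesis by simp
qed


lemma cl_inf_star:
  fixes G :: "('e, 'x) soft_set"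
  assumes ext: "\<forall>x e. x \<in> a x e"
  shows "soft_cl_inf a G = star a G"
proof -
  let ?U = "card_of (UNIV :: 'x set)"
  let ?Q = "\<lambda>\<gamma> :: 'x rel. Well_order \<gamma> \<and> (\<gamma>, ?U) \<in> ordLeq \<and>
        (\<forall>w :: 'x rel. Well_order w \<and> (\<gamma>, w) \<in> ordLeq \<longrightarrow> soft_cl_ord a w G = soft_cl_ord a \<gamma> G)"
  have woU: "Well_order ?U" by (rule card_of_Well_order)
  have UU: "(?U, ?U) \<in> ordLeq" by (rule ordLeq_reflexive[OF woU])
  have "?Q ?U"
  proof (intro conjI woU UU allI impI)
    fix w :: "'x rel" assume "Well_order w \<and> (?U, w) \<in> ordLeq"
    then show "soft_cl_ord a w G = soft_cl_ord a ?U G"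
      using cl_ord_star[OF _ ext, of w G] cl_ord_star[OF woU ext UU, of G] by simp
  qed
  then have Q: "?Q (SOME \<gamma>. ?Q \<gamma>)" by (rule someI)
  have "soft_cl_inf a G = soft_cl_ord a (SOME \<gamma>. ?Q \<gamma>) G"
    unfolding soft_cl_inf_def ..
  also have "\<dots> = soft_cl_ord a ?U G" using Q woU by (metis (no_types, lifting))
  also have "\<dots> = star a G" by (rule cl_ord_star[OF woU ext UU])
  finally show ?thesis .
qed

theorem theorem3p16:
  fixes \<tau> :: "('e, 'x) soft_set set"
    and a :: "'x \<Rightarrow> ('e, 'x) soft_set"
  assumes "soft_aura_space \<tau> a"
  shows "(\<forall>G :: ('e, 'x) soft_set. \<exists>\<gamma> :: 'x rel.
            Well_order \<gamma> \<and> (\<gamma>, card_of (UNIV :: 'x set)) \<in> ordLeq \<and>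
            (\<forall>w :: 'b rel. Well_order w \<and> (\<gamma>, w) \<in> ordLeq \<longrightarrow>
               soft_cl_ord a w G = soft_cl_ord a \<gamma> G))
       \<and> soft_cl_inf a soft_null = soft_null
       \<and> (\<forall>G. soft_subset G (soft_cl_inf a G))
       \<and> (\<forall>G H. soft_cl_inf a (soft_union G H) = soft_union (soft_cl_inf a G) (soft_cl_inf a H))
       \<and> (\<forall>G. soft_cl_inf a (soft_cl_inf a G) = soft_cl_inf a G)"
proof -
  have ext: "\<forall>x e. x \<in> a x e" using assms unfolding soft_aura_space_def by blast
  let ?U = "card_of (UNIV :: 'x set)"
  have woU: "Well_order ?U" by (rule card_of_Well_order)
  have UU: "(?U, ?U) \<in> ordLeq" by (rule ordLeq_reflexive[OF woU])
  have p1: "\<forall>G :: ('e, 'x) soft_set. \<exists>\<gamma> :: 'x rel.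
            Well_order \<gamma> \<and> (\<gamma>, card_of (UNIV :: 'x set)) \<in> ordLeq \<and>
            (\<forall>w :: 'b rel. Well_order w \<and> (\<gamma>, w) \<in> ordLeq \<longrightarrow>
               soft_cl_ord a w G = soft_cl_ord a \<gamma> G)"
  proof
    fix G :: "('e, 'x) soft_set"
    show "\<exists>\<gamma> :: 'x rel.
            Well_order \<gamma> \<and> (\<gamma>, card_of (UNIV :: 'x set)) \<in> ordLeq \<and>
            (\<forall>w :: 'b rel. Well_order w \<and> (\<gamma>, w) \<in> ordLeq \<longrightarrow>
               soft_cl_ord a w G = soft_cl_ord a \<gamma> G)"
    proof (intro exI[of _ ?U] conjI woU UU allI impI)
      fix w :: "'b rel" assume "Well_order w \<and> (?U, w) \<in> ordLeq"
      then show "soft_cl_ord a w G = soft_cl_ord a ?U G"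
        using cl_ord_star[OF _ ext, of w G] cl_ord_star[OF woU ext UU, of G] by simp
    qed
  qed
  have nul: "soft_null = (bot :: ('e, 'x) soft_set)" unfolding soft_null_def by auto
  have un: "soft_union G H = sup G H" for G H :: "('e, 'x) soft_set"
    unfolding soft_union_def by auto
  have sub: "soft_subset G H \<longleftrightarrow> G \<le> H" for G H :: "('e, 'x) soft_set"
    unfolding soft_subset_def le_fun_def by auto
  show ?thesis
    using p1 unfolding cl_inf_star[OF ext] nul un sub
    by (simp add: star_bot G_le_star star_sup star_star[OF ext])
qed

end
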